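(* Let $R$ be a commutative ring with identity. If $R$ is semi-complemented, then $R$ is almost complemented.
   Context: $\mathfrak{N}(R)$ is the nilradical and $\mathrm{reg}(R)$ the set of regular elements (non-zero-divisors). An element $a$ is complemented if there is $b$ with $ab=0$ and $a+b\in\mathrm{reg}(R)$; a ring is complemented if all its elements are. $R$ is semi-complemented if every element of $R\setminus\mathfrak{N}(R)$ is complemented. $R$ is almost complemented if $R/\mathfrak{N}(R)$ is a complemented ring. *)

theory Defs
  imports "HOL-Algebra.QuotRing"
begin

definition nilradical :: "('a, 'b) ring_scheme \<Rightarrow> 'a set" where
  "nilradical R = {a \<in> carrier R. \<exists>n::nat. a [^]\<^bsub>R\<^esub> n = \<zero>\<^bsub>R\<^esub>}"

text \<open>Regular elements (non-zero-divisors), for commutative rings.\<close>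
definition regular_elems :: "('a, 'b) ring_scheme \<Rightarrow> 'a set" where
  "regular_elems R = {a \<in> carrier R. \<forall>b \<in> carrier R. a \<otimes>\<^bsub>R\<^esub> b = \<zero>\<^bsub>R\<^esub> \<longrightarrow> b = \<zero>\<^bsub>R\<^esub>}"

definition complemented_elem :: "('a, 'b) ring_scheme \<Rightarrow> 'a \<Rightarrow> bool" where
  "complemented_elem R a \<longleftrightarrow>
     (\<exists>b \<in> carrier R. a \<otimes>\<^bsub>R\<^esub> b = \<zero>\<^bsub>R\<^esub> \<and> a \<oplus>\<^bsub>R\<^esub> b \<in> regular_elems R)"

definition complemented_ring :: "('a, 'b) ring_scheme \<Rightarrow> bool" where
  "complemented_ring R \<longleftrightarrow> (\<forall>a \<in> carrier R. complemented_elem R a)"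

definition semi_complemented :: "('a, 'b) ring_scheme \<Rightarrow> bool" where
  "semi_complemented R \<longleftrightarrow> (\<forall>a \<in> carrier R - nilradical R. complemented_elem R a)"

definition almost_complemented :: "('a, 'b) ring_scheme \<Rightarrow> bool" where
  "almost_complemented R \<longleftrightarrow> complemented_ring (R Quot (nilradical R))"

end

theory Submission
  imports Defs
begin

lemma (in cring) nil_sum_aux:
  fixes k :: nat
  assumes x: "x \<in> carrier R" and y: "y \<in> carrier R"
  shows "\<forall>i j. i + j = k \<longrightarrow> (\<exists>r\<in>carrier R. \<exists>s\<in>carrier R.
           (x \<oplus> y) [^] k = x [^] i \<otimes> r \<oplus> y [^] j \<otimes> s)"
proof (induction k)
  case 0
  have "(x \<oplus> y) [^] (0::nat) = x [^] (0::nat) \<otimes> \<one> \<oplus> y [^] (0::nat) \<otimes> \<zero>" using x y by simp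
  then show ?case by blast
next
  case (Suc k)
  show ?case
  proof (intro allI impI)
    fix i j assume ij: "i + j = Suc k"
    show "\<exists>r\<in>carrier R. \<exists>s\<in>carrier R. (x \<oplus> y) [^] Suc k = x [^] i \<otimes> r \<oplus> y [^] j \<otimes> s"
    proof (cases "i = 0")
      case True
      then show ?thesis using x y
        proof -
          have "(x \<oplus> y) [^] Suc k = x [^] i \<otimes> (x \<oplus> y) [^] Suc k \<oplus> y [^] j \<otimes> \<zero>"
            using x y True by simp
          then show ?thesis using x y by blast
        qed
    next
      case False
      show ?thesis
      proof (cases "j = 0")
        case True
        have "(x \<oplus> y) [^] Suc k = x [^] i \<otimes> \<zero> \<oplus> y [^] j \<otimes> (x \<oplus> y) [^] Suc k"
          using x y True by simp
        then show ?thesis using x y by blast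
      next
        case jF: False
        obtain i' j' where i': "i = Suc i'" and j': "j = Suc j'"
          using False jF by (metis not0_implies_Suc)
        from Suc.IH[rule_format, of i' j] ij i'
        obtain r1 s1 where r1: "r1 \<in> carrier R" and s1: "s1 \<in> carrier R"
          and e1: "(x \<oplus> y) [^] k = x [^] i' \<otimes> r1 \<oplus> y [^] j \<otimes> s1" by auto
        from Suc.IH[rule_format, of i j'] ij j'
        obtain r2 s2 where r2: "r2 \<in> carrier R" and s2: "s2 \<in> carrier R"
          and e2: "(x \<oplus> y) [^] k = x [^] i \<otimes> r2 \<oplus> y [^] j' \<otimes> s2" by auto
        have "(x \<oplus> y) [^] Suc k = (x \<oplus> y) [^] k \<otimes> x \<oplus> (x \<oplus> y) [^] k \<otimes> y"
          using x y by (simp add: r_distr)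
        also have "\<dots> = (x [^] i' \<otimes> r1 \<oplus> y [^] j \<otimes> s1) \<otimes> x \<oplus> (x [^] i \<otimes> r2 \<oplus> y [^] j' \<otimes> s2) \<otimes> y"
          using e1 e2 by simp
        also have "\<dots> = (x [^] i' \<otimes> x) \<otimes> (r1 \<oplus> r2 \<otimes> y) \<oplus> (y [^] j' \<otimes> y) \<otimes> (s1 \<otimes> x \<oplus> s2)"
        proof -
          have A: "x [^] i = x [^] i' \<otimes> x" "y [^] j = y [^] j' \<otimes> y" using i' j' by simp_all
          have X: "x [^] i' \<in> carrier R" "y [^] j' \<in> carrier R" using x y by simp_all
          have G: "\<And>X Y. X \<in> carrier R \<Longrightarrow> Y \<in> carrier R \<Longrightarrow>
            (X \<otimes> r1 \<oplus> (Y \<otimes> y) \<otimes> s1) \<otimes> x \<oplus> ((X \<otimes> x) \<otimes> r2 \<oplus> Y \<otimes> s2) \<otimes> y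
            = (X \<otimes> x) \<otimes> (r1 \<oplus> r2 \<otimes> y) \<oplus> (Y \<otimes> y) \<otimes> (s1 \<otimes> x \<oplus> s2)"
            using x y r1 r2 s1 s2 by algebra
          show ?thesis unfolding A using G[OF X] .
        qed
        also have "\<dots> = x [^] i \<otimes> (r1 \<oplus> r2 \<otimes> y) \<oplus> y [^] j \<otimes> (s1 \<otimes> x \<oplus> s2)"
          using i' j' by simp
        finally show ?thesis using x y r1 r2 s1 s2 by blast
      qed
    qed
  qed
qed

lemma (in cring) nilradical_ideal: "ideal (nilradical R) R"
proof (rule idealI)
  show "ring R" by (rule ring_axioms)
  show "subgroup (nilradical R) (add_monoid R)"
  proof (rule add.subgroupI)
    show "nilradical R \<subseteq> carrier R" by (auto simp: nilradical_def)
    have "\<zero> \<in> nilradical R"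
      proof -
      have "\<zero> [^] (1::nat) = \<zero>" by simp
      then show ?thesis unfolding nilradical_def by blast
    qed
    then show "nilradical R \<noteq> {}" by blast
    fix a assume "a \<in> nilradical R"
    then obtain n :: nat where a: "a \<in> carrier R" and n: "a [^] n = \<zero>"  unfolding nilradical_def by blast
    have "(\<ominus> a) [^] n = (\<ominus> \<one> \<otimes> a) [^] n" using a by (simp add: l_minus)
    also have "\<dots> = (\<ominus> \<one>) [^] n \<otimes> a [^] n" using a by (simp add: nat_pow_distrib)
    also have "\<dots> = \<zero>" using n by simp
    finally show "\<ominus> a \<in> nilradical R"
      using a by (auto simp: nilradical_def)
  next
    fix a b assume "a \<in> nilradical R" "b \<in> nilradical R"
    then obtain m n :: nat where a: "a \<in> carrier R" and m: "a [^] m = \<zero>"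
      and b: "b \<in> carrier R" and n: "b [^] n = \<zero>"  unfolding nilradical_def by blast
    from nil_sum_aux[OF a b, rule_format, of m n "m + n"]
    obtain r s where "r \<in> carrier R" "s \<in> carrier R"
      "(a \<oplus> b) [^] (m + n) = a [^] m \<otimes> r \<oplus> b [^] n \<otimes> s" by auto
    then have "(a \<oplus> b) [^] (m + n) = \<zero>" using m n by simp
    then show "a \<oplus> b \<in> nilradical R"
      using a b by (auto simp: nilradical_def)
  qed
next
  fix a x assume "a \<in> nilradical R" "x \<in> carrier R"
  then obtain n :: nat where a: "a \<in> carrier R" and n: "a [^] n = \<zero>" and x: "x \<in> carrier R"
    by (auto simp: nilradical_def)
  have "(x \<otimes> a) [^] n = \<zero>" using a x n by (simp add: nat_pow_distrib)
  moreover have "(a \<otimes> x) [^] n = \<zero>" using a x n by (simp add: nat_pow_distrib)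
  ultimately show "x \<otimes> a \<in> nilradical R" "a \<otimes> x \<in> nilradical R"
    using a x by (auto simp: nilradical_def)
qed


lemma (in cring) regular_mult:
  assumes "u \<in> regular_elems R" "v \<in> regular_elems R"
  shows "u \<otimes> v \<in> regular_elems R"
proof -
  have u: "u \<in> carrier R" and v: "v \<in> carrier R"
    and U: "\<And>b. b \<in> carrier R \<Longrightarrow> u \<otimes> b = \<zero> \<Longrightarrow> b = \<zero>"
    and V: "\<And>b. b \<in> carrier R \<Longrightarrow> v \<otimes> b = \<zero> \<Longrightarrow> b = \<zero>"
    using assms unfolding regular_elems_def by blast+
  have "b = \<zero>" if b: "b \<in> carrier R" and e: "u \<otimes> v \<otimes> b = \<zero>" for b
  proof -
    have "u \<otimes> (v \<otimes> b) = \<zero>" using e u v b by (simp add: m_assoc)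
    then have "v \<otimes> b = \<zero>" using U v b by blast
    then show ?thesis using V b by blast
  qed
  then show ?thesis using u v unfolding regular_elems_def by blast
qed

lemma (in cring) regular_pow:
  assumes "u \<in> regular_elems R"
  shows "u [^] (n::nat) \<in> regular_elems R"
proof (induction n)
  case 0
  then show ?case by (auto simp: regular_elems_def)
next
  case (Suc n)
  then show ?case using regular_mult[OF Suc assms] by simp
qed

lemma (in cring) main_aux:
  assumes "cring R"
    and "semi_complemented R"
  shows "almost_complemented R"
proof -
  define N where "N = nilradical R"
  interpret I: ideal N R unfolding N_def by (rule nilradical_ideal)
  let ?Q = "R Quot N"
  interpret Q: cring ?Q by (rule I.quotient_is_cring) (rule is_cring)
  interpret h: ring_hom_ring R ?Q "(+>) N" by (rule I.rcos_ring_hom_ring)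
  have carrQ: "\<exists>a\<in>carrier R. X = N +> a" if "X \<in> carrier ?Q" for X
  proof -
    have "carrier ?Q = a_rcosets N" by (simp only: FactRing_def ring_record_simps)
    then have "X \<in> (\<Union>a\<in>carrier R. {N +> a})" using that by (simp only: A_RCOSETS_def')
    then show ?thesis by blast
  qed
  have zeroQ: "\<zero>\<^bsub>?Q\<^esub> = N" by (simp only: FactRing_def ring_record_simps)
  have ker: "N +> a = N \<longleftrightarrow> a \<in> N" if "a \<in> carrier R" for a
    using that I.a_rcos_self I.a_rcos_const by auto
  have mulQ: "(N +> a) \<otimes>\<^bsub>?Q\<^esub> (N +> b) = N +> (a \<otimes> b)"
    if "a \<in> carrier R" "b \<in> carrier R" for a b
    using that h.hom_mult by simp
  have addQ: "(N +> a) \<oplus>\<^bsub>?Q\<^esub> (N +> b) = N +> (a \<oplus> b)"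
    if "a \<in> carrier R" "b \<in> carrier R" for a b
    using that h.hom_add by simp
  have inQ: "N +> a \<in> carrier ?Q" if "a \<in> carrier R" for a
    using that h.hom_closed by simp
  show ?thesis
    unfolding almost_complemented_def complemented_ring_def N_def[symmetric]
  proof
    fix X assume X: "X \<in> carrier ?Q"
    then obtain a where a: "a \<in> carrier R" and Xa: "X = N +> a" using carrQ by blast
    show "complemented_elem ?Q X"
    proof (cases "a \<in> N")
      case True
      then have X0: "X = \<zero>\<^bsub>?Q\<^esub>" using ker a Xa zeroQ by simp
      have "\<one>\<^bsub>?Q\<^esub> \<in> regular_elems ?Q"
        unfolding regular_elems_def by simp
      then show ?thesis unfolding complemented_elem_def X0
        by (intro bexI[of _ "\<one>\<^bsub>?Q\<^esub>"]) simp_all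
    next
      case False
      then have "a \<in> carrier R - nilradical R" using a N_def by simp
      with assms(2) obtain b where b: "b \<in> carrier R" and ab: "a \<otimes> b = \<zero>"
        and reg: "a \<oplus> b \<in> regular_elems R"
        unfolding semi_complemented_def complemented_elem_def by blast
      have "N +> (a \<oplus> b) \<in> regular_elems ?Q"
        unfolding regular_elems_def
      proof (intro CollectI conjI ballI impI)
        show "N +> (a \<oplus> b) \<in> carrier ?Q" using a b inQ by simp
        fix C assume C: "C \<in> carrier ?Q"
          and e: "(N +> (a \<oplus> b)) \<otimes>\<^bsub>?Q\<^esub> C = \<zero>\<^bsub>?Q\<^esub>"
        obtain c where c: "c \<in> carrier R" and Cc: "C = N +> c" using C carrQ by blast
        have "N +> ((a \<oplus> b) \<otimes> c) = N" using e Cc mulQ a b c zeroQ by simp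
        moreover have cc: "(a \<oplus> b) \<otimes> c \<in> carrier R" using a b c by simp
        ultimately have "(a \<oplus> b) \<otimes> c \<in> N" using ker[OF cc] by blast
        then obtain n :: nat where n: "((a \<oplus> b) \<otimes> c) [^] n = \<zero>"
          unfolding N_def nilradical_def by blast
        then have "(a \<oplus> b) [^] n \<otimes> c [^] n = \<zero>" using a b c by (simp add: nat_pow_distrib)
        moreover have "(a \<oplus> b) [^] n \<in> regular_elems R" using regular_pow[OF reg] .
        ultimately have "c [^] n = \<zero>" using c unfolding regular_elems_def by simp
        then have "c \<in> N" using c unfolding N_def nilradical_def by blast
        then show "C = \<zero>\<^bsub>?Q\<^esub>" using Cc ker c zeroQ by simp
      qed
      moreover have "X \<otimes>\<^bsub>?Q\<^esub> (N +> b) = \<zero>\<^bsub>?Q\<^esub>"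
      proof -
        have z0: "\<zero> [^] (1::nat) = \<zero>" by simp
        have z: "\<zero> \<in> N" unfolding N_def nilradical_def using z0 by blast
        have "X \<otimes>\<^bsub>?Q\<^esub> (N +> b) = N +> (a \<otimes> b)" using Xa mulQ[OF a b] by simp
        also have "\<dots> = N" using ab ker[OF zero_closed] z by simp
        finally show ?thesis using zeroQ by simp
      qed
      moreover have "X \<oplus>\<^bsub>?Q\<^esub> (N +> b) = N +> (a \<oplus> b)" using Xa addQ a b by simp
      ultimately show ?thesis unfolding complemented_elem_def using inQ[OF b] by (intro bexI[of _ "N +> b"]) simp_all
    qed
  qed
qed


theorem mainTheorem4:
  fixes R :: "('a, 'b) ring_scheme"
  assumes "cring R"
    and "semi_complemented R"
  shows "almost_complemented R"
  using cring.main_aux[OF assms(1) assms] .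

end
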